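(* Let $\tilde k$ be an $\mathbb R^\times_{>0}$-graded field and let $f\colon\mathcal X\to\mathcal Y$ and $g\colon\mathcal Y\to\mathcal Z$ be morphisms in $\mathrm{bir}_{\tilde k}$ such that $g\circ f$ is proper. Assume that either $g$ is separated or $f$ is proper. Then both $f$ and $g$ are proper.
   Context: A $G$-graded ring ($G=\mathbb R^\times_{>0}$) is $A=\oplus_{g\in G}A_g$; a graded field is a nonzero graded ring whose nonzero homogeneous elements are invertible. A graded valuation ring of a graded field $K$ is a graded subring $\mathcal O$ such that for every nonzero homogeneous $f\in K$, $f\in\mathcal O$ or $f^{-1}\in\mathcal O$. For graded fields $\tilde k\subseteq K$, $\mathbf P_{K/\tilde k}$ is the set of graded valuation rings of $K$ containing $\tilde k$, topologized by the basis of sets $\{\mathcal O: f_1,\dots,f_n\in\mathcal O\}$ for homogeneous $f_i\in K$. An object of $\mathrm{bir}_{\tilde k}$ is $\mathcal X=(X\to\mathbf P_{K/\tilde k})$: a graded field extension $K/\tilde k$ and a local homeomorphism $X\to\mathbf P_{K/\tilde k}$ with $X$ non-empty, connected, quasi-compact and quasi-separated. A morphism $(Y\to\mathbf P_{L/\tilde k})\to(X\to\mathbf P_{K/\tilde k})$ is a graded $\tilde k$-embedding $K\hookrightarrow L$ and a continuous map $Y\to X$ compatible with the restriction map $\mathbf P_{L/\tilde k}\to\mathbf P_{K/\tilde k}$, $\mathcal O\mapsto\mathcal O\cap K$. Such a morphism is separated (resp. proper) if the induced map $Y\to X\times_{\mathbf P_{K/\tilde k}}\mathbf P_{L/\tilde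 k}$ is injective (resp. bijective). *)

theory Defs
  imports "HOL-Analysis.Analysis"
begin

text \<open>A grading of a commutative ring (the type 'a) is given by the family of
  homogeneous pieces gr g for g > 0 (values at g \<le> 0 are irrelevant).\<close>

definition homogeneous :: "(real \<Rightarrow> 'a::comm_ring_1 set) \<Rightarrow> 'a set" where
  "homogeneous gr = (\<Union>g\<in>{g. g > 0}. gr g)"

definition graded_decomp :: "(real \<Rightarrow> 'a::comm_ring_1 set) \<Rightarrow> 'a \<Rightarrow> (real \<Rightarrow> 'a) \<Rightarrow> bool" where
  "graded_decomp gr x c \<longleftrightarrow>
     (\<forall>g. g > 0 \<longrightarrow> c g \<in> gr g) \<and> (\<forall>g. g \<le> 0 \<longrightarrow> c g = 0) \<and>
     finite {g. c g \<noteq> 0} \<and> x = (\<Sum>g\<in>{g. c g \<noteq> 0}. c g)"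

definition graded_ring :: "(real \<Rightarrow> 'a::comm_ring_1 set) \<Rightarrow> bool" where
  "graded_ring gr \<longleftrightarrow>
     (\<forall>g>0. 0 \<in> gr g \<and> (\<forall>x\<in>gr g. \<forall>y\<in>gr g. x + y \<in> gr g) \<and> (\<forall>x\<in>gr g. - x \<in> gr g)) \<and>
     1 \<in> gr 1 \<and>
     (\<forall>g>0. \<forall>h>0. \<forall>x\<in>gr g. \<forall>y\<in>gr h. x * y \<in> gr (g * h)) \<and>
     (\<forall>x. \<exists>!c. graded_decomp gr x c)"

definition graded_field :: "(real \<Rightarrow> 'a::comm_ring_1 set) \<Rightarrow> bool" where
  "graded_field gr \<longleftrightarrow> graded_ring gr \<and> (0::'a) \<noteq> 1 \<and>
     (\<forall>f\<in>homogeneous gr. f \<noteq> 0 \<longrightarrow> (\<exists>u. f * u = 1))"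

definition graded_subring :: "(real \<Rightarrow> 'a::comm_ring_1 set) \<Rightarrow> 'a set \<Rightarrow> bool" where
  "graded_subring gr S \<longleftrightarrow>
     0 \<in> S \<and> 1 \<in> S \<and> (\<forall>x\<in>S. \<forall>y\<in>S. x + y \<in> S \<and> x * y \<in> S) \<and> (\<forall>x\<in>S. - x \<in> S) \<and>
     (\<forall>x\<in>S. \<forall>c. graded_decomp gr x c \<longrightarrow> (\<forall>g. c g \<in> S))"

definition graded_valuation_ring :: "(real \<Rightarrow> 'a::comm_ring_1 set) \<Rightarrow> 'a set \<Rightarrow> bool" where
  "graded_valuation_ring gr V \<longleftrightarrow> graded_subring gr V \<and>
     (\<forall>f\<in>homogeneous gr. f \<noteq> 0 \<longrightarrow> f \<in> V \<or> (\<exists>u\<in>V. f * u = 1))"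

definition graded_embedding ::
  "(real \<Rightarrow> 'a::comm_ring_1 set) \<Rightarrow> (real \<Rightarrow> 'b::comm_ring_1 set) \<Rightarrow> ('a \<Rightarrow> 'b) \<Rightarrow> bool" where
  "graded_embedding grA grB \<phi> \<longleftrightarrow>
     \<phi> 1 = 1 \<and> (\<forall>x y. \<phi> (x + y) = \<phi> x + \<phi> y) \<and> (\<forall>x y. \<phi> (x * y) = \<phi> x * \<phi> y) \<and>
     inj \<phi> \<and> (\<forall>g>0. \<phi> ` grA g \<subseteq> grB g)"

definition Pset :: "(real \<Rightarrow> 'a::comm_ring_1 set) \<Rightarrow> ('k \<Rightarrow> 'a) \<Rightarrow> 'a set set" where
  "Pset grK \<iota> = {V. graded_valuation_ring grK V \<and> range \<iota> \<subseteq> V}"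

definition Pspace :: "(real \<Rightarrow> 'a::comm_ring_1 set) \<Rightarrow> ('k \<Rightarrow> 'a) \<Rightarrow> 'a set topology" where
  "Pspace grK \<iota> = topology_generated_by
     {{V \<in> Pset grK \<iota>. F \<subseteq> V} | F. finite F \<and> F \<subseteq> homogeneous grK}"

definition local_homeomorphism :: "'p topology \<Rightarrow> 'q topology \<Rightarrow> ('p \<Rightarrow> 'q) \<Rightarrow> bool" where
  "local_homeomorphism X Y f \<longleftrightarrow> continuous_map X Y f \<and>
     (\<forall>x\<in>topspace X. \<exists>U. openin X U \<and> x \<in> U \<and> openin Y (f ` U) \<and>
        homeomorphic_map (subtopology X U) (subtopology Y (f ` U)) f)"

definition quasi_separated :: "'p topology \<Rightarrow> bool" where
  "quasi_separated X \<longleftrightarrow> (\<forall>U V. openin X U \<and> compactin X U \<and> openin X V \<and> compactin X V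
      \<longrightarrow> compactin X (U \<inter> V))"

definition bir_obj ::
  "(real \<Rightarrow> 'k::comm_ring_1 set) \<Rightarrow> (real \<Rightarrow> 'a::comm_ring_1 set) \<Rightarrow> ('k \<Rightarrow> 'a)
   \<Rightarrow> 'p topology \<Rightarrow> ('p \<Rightarrow> 'a set) \<Rightarrow> bool" where
  "bir_obj grk grK \<iota> X \<pi> \<longleftrightarrow>
     graded_field grk \<and> graded_field grK \<and> graded_embedding grk grK \<iota> \<and>
     topspace X \<noteq> {} \<and> connected_space X \<and> compact_space X \<and> quasi_separated X \<and>
     local_homeomorphism X (Pspace grK \<iota>) \<pi>"

text \<open>A morphism (Y \<rightarrow> P_{L/k}) \<rightarrow> (X \<rightarrow> P_{K/k}): a graded k-embedding \<phi> : K \<rightarrow> L and a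
  continuous map h : Y \<rightarrow> X compatible with the restriction O \<mapsto> O \<inter> K = \<phi>^{-1}(O).\<close>
definition bir_mor ::
  "(real \<Rightarrow> 'k::comm_ring_1 set)
   \<Rightarrow> (real \<Rightarrow> 'b::comm_ring_1 set) \<Rightarrow> ('k \<Rightarrow> 'b) \<Rightarrow> 'q topology \<Rightarrow> ('q \<Rightarrow> 'b set)
   \<Rightarrow> (real \<Rightarrow> 'a::comm_ring_1 set) \<Rightarrow> ('k \<Rightarrow> 'a) \<Rightarrow> 'p topology \<Rightarrow> ('p \<Rightarrow> 'a set)
   \<Rightarrow> ('a \<Rightarrow> 'b) \<Rightarrow> ('q \<Rightarrow> 'p) \<Rightarrow> bool" where
  "bir_mor grk grL \<iota>L Y \<pi>Y grK \<iota>K X \<pi>X \<phi> h \<longleftrightarrow>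
     bir_obj grk grL \<iota>L Y \<pi>Y \<and> bir_obj grk grK \<iota>K X \<pi>X \<and>
     graded_embedding grK grL \<phi> \<and> (\<forall>a. \<phi> (\<iota>K a) = \<iota>L a) \<and>
     continuous_map Y X h \<and>
     (\<forall>y\<in>topspace Y. \<pi>X (h y) = {a. \<phi> a \<in> \<pi>Y y})"

definition fibre_prod ::
  "(real \<Rightarrow> 'b::comm_ring_1 set) \<Rightarrow> ('k \<Rightarrow> 'b)
   \<Rightarrow> 'p topology \<Rightarrow> ('p \<Rightarrow> 'a::comm_ring_1 set) \<Rightarrow> ('a \<Rightarrow> 'b) \<Rightarrow> ('p \<times> 'b set) set" where
  "fibre_prod grL \<iota>L X \<pi>X \<phi> =
     {(x, V). x \<in> topspace X \<and> V \<in> topspace (Pspace grL \<iota>L) \<and> \<pi>X x = {a. \<phi> a \<in> V}}"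

definition mor_separated ::
  "(real \<Rightarrow> 'b::comm_ring_1 set) \<Rightarrow> ('k \<Rightarrow> 'b) \<Rightarrow> 'q topology \<Rightarrow> ('q \<Rightarrow> 'b set)
   \<Rightarrow> 'p topology \<Rightarrow> ('p \<Rightarrow> 'a::comm_ring_1 set) \<Rightarrow> ('a \<Rightarrow> 'b) \<Rightarrow> ('q \<Rightarrow> 'p) \<Rightarrow> bool" where
  "mor_separated grL \<iota>L Y \<pi>Y X \<pi>X \<phi> h \<longleftrightarrow> inj_on (\<lambda>y. (h y, \<pi>Y y)) (topspace Y)"

definition mor_proper ::
  "(real \<Rightarrow> 'b::comm_ring_1 set) \<Rightarrow> ('k \<Rightarrow> 'b) \<Rightarrow> 'q topology \<Rightarrow> ('q \<Rightarrow> 'b set)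
   \<Rightarrow> 'p topology \<Rightarrow> ('p \<Rightarrow> 'a::comm_ring_1 set) \<Rightarrow> ('a \<Rightarrow> 'b) \<Rightarrow> ('q \<Rightarrow> 'p) \<Rightarrow> bool" where
  "mor_proper grL \<iota>L Y \<pi>Y X \<pi>X \<phi> h \<longleftrightarrow>
     bij_betw (\<lambda>y. (h y, \<pi>Y y)) (topspace Y) (fibre_prod grL \<iota>L X \<pi>X \<phi>)"

end

theory Submission
  imports Defs
begin


inductive_set asum :: "'a::comm_ring_1 set \<Rightarrow> 'a set" for S where
  asum_0[intro]: "0 \<in> asum S"
| asum_add[intro]: "a \<in> S \<Longrightarrow> b \<in> asum S \<Longrightarrow> a + b \<in> asum S"

lemma asum_base[intro]: "a \<in> S \<Longrightarrow> a \<in> asum S"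
  using asum_add[of a S 0] by auto

lemma asum_plus: "x \<in> asum S \<Longrightarrow> y \<in> asum S \<Longrightarrow> x + y \<in> asum S"
  by (induction x rule: asum.induct) (auto simp: add.assoc)

lemma asum_mono: assumes "S \<subseteq> T" "x \<in> asum S" shows "x \<in> asum T"
  using assms(2,1) by (induction x rule: asum.induct) auto

lemma asum_sum: "finite F \<Longrightarrow> (\<And>i. i \<in> F \<Longrightarrow> f i \<in> asum S) \<Longrightarrow> sum f F \<in> asum S"
  by (induction F rule: finite_induct) (auto intro: asum_plus)

lemma asum_closed: assumes "\<And>a b. a \<in> S \<Longrightarrow> b \<in> T \<Longrightarrow> a + b \<in> T" "0 \<in> T" "x \<in> asum S" shows "x \<in> T"
  using assms(3,1,2) by (induction x rule: asum.induct) auto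

lemma asum_lmult: assumes "\<And>a. a \<in> S \<Longrightarrow> c * a \<in> asum T" "x \<in> asum S" shows "c * x \<in> asum T"
  using assms(2,1) by (induction x rule: asum.induct) (auto simp: distrib_left intro: asum_plus)

lemma asum_image: assumes f: "\<And>x y. f (x + y) = f x + f y" and x: "x \<in> asum S" shows "f x \<in> asum (f ` S)"
  using x
proof (induction x rule: asum.induct)
  case asum_0
  have "f 0 = f 0 + f 0" using f by (metis add_0)
  then show ?case by auto
next
  case (asum_add a b) then show ?case by (auto simp: f)
qed

section \<open>graded rings\<close>

lemma gr_facts:
  assumes "graded_ring gr"
  shows gr_zero: "g > 0 \<Longrightarrow> 0 \<in> gr g"
    and gr_add: "g > 0 \<Longrightarrow> x \<in> gr g \<Longrightarrow> y \<in> gr g \<Longrightarrow> x + y \<in> gr g"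
    and gr_neg: "g > 0 \<Longrightarrow> x \<in> gr g \<Longrightarrow> - x \<in> gr g"
    and gr_one: "1 \<in> gr 1"
    and gr_mult: "g > 0 \<Longrightarrow> h > 0 \<Longrightarrow> x \<in> gr g \<Longrightarrow> y \<in> gr h \<Longrightarrow> x * y \<in> gr (g * h)"
    and gr_ex: "\<exists>c. graded_decomp gr x c"
    and gr_uniq: "graded_decomp gr x c \<Longrightarrow> graded_decomp gr x c' \<Longrightarrow> c = c'"
  using assms unfolding graded_ring_def by blast+

lemma gr_sum:
  assumes "graded_ring gr" "g > 0" "finite F" "\<And>i. i \<in> F \<Longrightarrow> f i \<in> gr g"
  shows "sum f F \<in> gr g"
  using assms(3,4) by (induction F rule: finite_induct) (auto intro: gr_facts[OF assms(1)] assms(2))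

lemma gr_asum:
  assumes "graded_ring gr" "g > 0" "S \<subseteq> gr g" "x \<in> asum S"
  shows "x \<in> gr g"
  using assms(4,3) by (induction x rule: asum.induct) (auto intro: gr_facts[OF assms(1)] assms(2))

lemma gr_mult1:
  assumes "graded_ring gr" "x \<in> gr 1" "y \<in> gr 1" shows "x * y \<in> gr 1"
  using gr_mult[OF assms(1), of 1 1 x y] assms by simp

lemma decomp_single:
  assumes "graded_ring gr" "g > 0" "z \<in> gr g"
  shows "graded_decomp gr z (\<lambda>h. if h = g then z else 0)"
proof -
  have "{h. (if h = g then z else 0) \<noteq> 0} = (if z = 0 then {} else {g})" by auto
  then show ?thesis using assms gr_zero[OF assms(1)] unfolding graded_decomp_def by auto
qed

lemma gr_disjoint:
  assumes "graded_ring gr" "g > 0" "h > 0" "g \<noteq> h" "z \<in> gr g" "z \<in> gr h"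
  shows "z = 0"
proof -
  have "(\<lambda>k. if k = g then z else 0) = (\<lambda>k. if k = h then z else 0)"
    using gr_uniq[OF assms(1) decomp_single[OF assms(1,2,5)] decomp_single[OF assms(1,3,6)]] .
  then show ?thesis using assms(4) by metis
qed

lemma homogeneous_iff: "x \<in> homogeneous gr \<longleftrightarrow> (\<exists>g>0. x \<in> gr g)"
  unfolding homogeneous_def by auto

lemma decomp_asum:
  assumes gr: "graded_ring gr" and S: "S \<subseteq> homogeneous gr" and z: "z \<in> asum S"
  shows "\<exists>c. graded_decomp gr z c \<and> (\<forall>g>0. c g \<in> asum (S \<inter> gr g))"
  using z
proof (induction z rule: asum.induct)
  case asum_0
  show ?case
    by (rule exI[of _ "\<lambda>_. 0"]) (auto simp: graded_decomp_def gr_zero[OF gr])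
next
  case (asum_add a z)
  then obtain c where c: "graded_decomp gr z c" "\<forall>g>0. c g \<in> asum (S \<inter> gr g)" by blast
  obtain d where d: "d > 0" "a \<in> gr d" using asum_add(1) S homogeneous_iff by blast
  define c' where "c' = (\<lambda>g. c g + (if g = d then a else 0))"
  have fin: "finite {g. c g \<noteq> 0}" using c(1) unfolding graded_decomp_def by blast
  let ?F = "insert d {g. c g \<noteq> 0}"
  have sub: "{g. c' g \<noteq> 0} \<subseteq> ?F" unfolding c'_def by auto
  have "sum c' {g. c' g \<noteq> 0} = sum c' ?F"
    by (rule sum.mono_neutral_left) (use fin sub in auto)
  also have "\<dots> = sum c ?F + a"
    unfolding c'_def sum.distrib using fin by (simp add: sum.delta)
  also have "sum c ?F = sum c {g. c g \<noteq> 0}"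
    by (rule sum.mono_neutral_right) (use fin in auto)
  also have "\<dots> = z" using c(1) unfolding graded_decomp_def by simp
  finally have eq: "sum c' {g. c' g \<noteq> 0} = a + z" by (simp add: add.commute)
  have "graded_decomp gr (a + z) c'"
    unfolding graded_decomp_def
  proof (intro conjI allI impI)
    fix g :: real assume "g > 0"
    then show "c' g \<in> gr g" using c(1) d unfolding graded_decomp_def c'_def
      by (auto intro: gr_add[OF gr] simp: gr_zero[OF gr])
  next
    fix g :: real assume "g \<le> 0"
    then show "c' g = 0" using c(1) d unfolding graded_decomp_def c'_def by auto
  next
    show "finite {g. c' g \<noteq> 0}" using fin sub finite_subset by blast
  next
    show "a + z = sum c' {g. c' g \<noteq> 0}" using eq by simp
  qed
  moreover have "\<forall>g>0. c' g \<in> asum (S \<inter> gr g)"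
  proof (intro allI impI)
    fix g :: real assume "g > 0"
    show "c' g \<in> asum (S \<inter> gr g)"
    proof (cases "g = d")
      case True
      then have "c' g = a + c g" unfolding c'_def by (simp add: add.commute)
      then show ?thesis using True asum_add(1) d c(2) \<open>g > 0\<close> by auto
    next
      case False then show ?thesis using c(2) \<open>g > 0\<close> unfolding c'_def by auto
    qed
  qed
  ultimately show ?case by blast
qed

lemma proj:
  assumes gr: "graded_ring gr" and S: "S \<subseteq> homogeneous gr" and z: "z \<in> asum S"
    and g: "g > 0" "z \<in> gr g"
  shows "z \<in> asum (S \<inter> gr g)"
proof -
  obtain c where c: "graded_decomp gr z c" "\<forall>g>0. c g \<in> asum (S \<inter> gr g)"
    using decomp_asum[OF gr S z] by blast
  have "c = (\<lambda>h. if h = g then z else 0)"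
    using gr_uniq[OF gr c(1) decomp_single[OF gr g]] .
  then show ?thesis using c(2) g by metis
qed

lemma inverse_hom:
  assumes gr: "graded_ring gr" and g: "g > 0" "x \<in> gr g" and xu: "x * u = 1"
  shows "u \<in> gr (1 / g)"
proof -
  obtain c where c: "graded_decomp gr u c" using gr_ex[OF gr] by blast
  let ?F = "{h. c h \<noteq> 0}"
  have fin: "finite ?F" and u: "u = sum c ?F" and pos: "\<And>h. h \<in> ?F \<Longrightarrow> h > 0"
    and ch: "\<And>h. h > 0 \<Longrightarrow> c h \<in> gr h"
    using c unfolding graded_decomp_def by (auto simp: not_le[symmetric])
  have "1 = (\<Sum>h\<in>?F. x * c h)" using xu u by (simp add: sum_distrib_left)
  also have "\<dots> \<in> asum ((\<lambda>h. x * c h) ` ?F)"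
    by (rule asum_sum[OF fin]) auto
  finally have one: "1 \<in> asum ((\<lambda>h. x * c h) ` ?F)" .
  have S: "(\<lambda>h. x * c h) ` ?F \<subseteq> homogeneous gr"
  proof
    fix t assume "t \<in> (\<lambda>h. x * c h) ` ?F"
    then obtain h where "h \<in> ?F" "t = x * c h" by auto
    then have "t \<in> gr (g * h)" "g * h > 0" using pos ch g gr_mult[OF gr] by auto
    then show "t \<in> homogeneous gr" unfolding homogeneous_iff by blast
  qed
  have "1 \<in> asum ((\<lambda>h. x * c h) ` ?F \<inter> gr 1)"
    by (rule proj[OF gr S one]) (auto simp: gr_one[OF gr])
  moreover have "asum ((\<lambda>h. x * c h) ` ?F \<inter> gr 1) \<subseteq> {x * w | w. w \<in> gr (1/g)}"
  proof
    fix t assume "t \<in> asum ((\<lambda>h. x * c h) ` ?F \<inter> gr 1)"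
    then show "t \<in> {x * w | w. w \<in> gr (1/g)}"
    proof (rule asum_closed[rotated 2, where S="(\<lambda>h. x * c h) ` ?F \<inter> gr 1"])
      show "0 \<in> {x * w |w. w \<in> gr (1 / g)}"
        using gr_zero[OF gr, of "1/g"] g by (auto intro!: exI[of _ 0])
    next
      fix a b assume a: "a \<in> (\<lambda>h. x * c h) ` ?F \<inter> gr 1" and b: "b \<in> {x * w |w. w \<in> gr (1 / g)}"
      then obtain h where h: "h \<in> ?F" "a = x * c h" "a \<in> gr 1" by auto
      obtain w where w: "b = x * w" "w \<in> gr (1/g)" using b by auto
      have "\<exists>v\<in>gr (1/g). a = x * v"
      proof (cases "g * h = 1")
        case True
        then have "h = 1/g" using g by (auto simp: field_simps)
        then show ?thesis using h ch pos by auto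
      next
        case False
        have "a \<in> gr (g * h)" using h gr_mult[OF gr] g ch pos by auto
        then have "a = 0" using gr_disjoint[OF gr, of 1 "g*h" a] h False g pos by auto
        then show ?thesis using gr_zero[OF gr, of "1/g"] g by (auto intro!: bexI[of _ 0])
      qed
      then obtain v where "v \<in> gr (1/g)" "a = x * v" by blast
      then show "a + b \<in> {x * w |w. w \<in> gr (1 / g)}"
        using w gr_add[OF gr, of "1/g" v w] g by (auto simp: distrib_left intro!: exI[of _ "v + w"])
    qed
  qed
  ultimately obtain w where w: "1 = x * w" "w \<in> gr (1/g)" by auto
  have "u = u * (x * w)" using w by simp
  also have "\<dots> = w" using xu by (simp add: mult.assoc[symmetric] mult.commute)
  finally show ?thesis using w by simp
qed



definition Mset :: "(real \<Rightarrow> 'b::comm_ring_1 set) \<Rightarrow> 'b set \<Rightarrow> 'b set" where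
  "Mset grK W = {m \<in> W \<inter> homogeneous grK. \<not> (\<exists>u\<in>W. m * u = 1)}"

definition Tset :: "(real \<Rightarrow> 'b::comm_ring_1 set) \<Rightarrow> 'b set \<Rightarrow> ('b \<Rightarrow> 'a::comm_ring_1) \<Rightarrow> 'a set \<Rightarrow> 'a set" where
  "Tset grK W \<phi> H = {r * \<phi> m | r m. r \<in> H \<and> m \<in> Mset grK W}"

definition Jset :: "(real \<Rightarrow> 'b::comm_ring_1 set) \<Rightarrow> 'b set \<Rightarrow> ('b \<Rightarrow> 'a::comm_ring_1) \<Rightarrow> 'a set \<Rightarrow> 'a set" where
  "Jset grK W \<phi> H = asum (Tset grK W \<phi> H)"

definition Pfam :: "(real \<Rightarrow> 'b::comm_ring_1 set) \<Rightarrow> (real \<Rightarrow> 'a::comm_ring_1 set) \<Rightarrow> 'b set \<Rightarrow> ('b \<Rightarrow> 'a) \<Rightarrow> 'a set set" where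
  "Pfam grK grL W \<phi> = {H. H \<subseteq> homogeneous grL \<and> \<phi> ` (W \<inter> homogeneous grK) \<subseteq> H \<and>
      (\<forall>a\<in>H. \<forall>b\<in>H. a * b \<in> H) \<and> 1 \<notin> Jset grK W \<phi> H}"

definition adj :: "'a::comm_ring_1 set \<Rightarrow> 'a \<Rightarrow> 'a set" where
  "adj H z = {h * z ^ e | h e. h \<in> H}"

definition Rel :: "(real \<Rightarrow> 'b::comm_ring_1 set) \<Rightarrow> 'b set \<Rightarrow> ('b \<Rightarrow> 'a::comm_ring_1) \<Rightarrow> (real \<Rightarrow> 'a set)
   \<Rightarrow> 'a set \<Rightarrow> 'a \<Rightarrow> nat \<Rightarrow> (nat \<Rightarrow> 'a) \<Rightarrow> bool" where
  "Rel grK W \<phi> grL H z n a \<longleftrightarrow> (\<forall>i. a i \<in> Jset grK W \<phi> H) \<and> (\<forall>i. a i * z ^ i \<in> grL 1) \<and>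
      (\<forall>i>n. a i = 0) \<and> 1 = (\<Sum>i\<le>n. a i * z ^ i)"

lemma polysum_ext:
  fixes a :: "nat \<Rightarrow> 'a::comm_ring_1"
  assumes "\<forall>i>n. a i = 0" "n \<le> N"
  shows "(\<Sum>i\<le>N. a i * z ^ i) = (\<Sum>i\<le>n. a i * z ^ i)"
  by (rule sum.mono_neutral_right) (use assms in auto)

locale chev =
  fixes grK :: "real \<Rightarrow> 'b::comm_ring_1 set" and grL :: "real \<Rightarrow> 'a::comm_ring_1 set"
    and \<phi> :: "'b \<Rightarrow> 'a" and W :: "'b set"
  assumes fK: "graded_field grK" and fL: "graded_field grL"
    and emb: "graded_embedding grK grL \<phi>" and val: "graded_valuation_ring grK W"
begin

lemma rK: "graded_ring grK" using fK unfolding graded_field_def by blast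
lemma rL: "graded_ring grL" using fL unfolding graded_field_def by blast

lemma emb_all: "\<phi> 1 = 1 \<and> (\<forall>x y. \<phi> (x + y) = \<phi> x + \<phi> y) \<and> (\<forall>x y. \<phi> (x * y) = \<phi> x * \<phi> y) \<and>
     inj \<phi> \<and> (\<forall>g>0. \<phi> ` grK g \<subseteq> grL g)"
  using emb unfolding graded_embedding_def .
lemma phi_add: "\<phi> (x + y) = \<phi> x + \<phi> y" using emb_all[THEN conjunct2, THEN conjunct1, rule_format] .
lemma phi_mult: "\<phi> (x * y) = \<phi> x * \<phi> y" using emb_all[THEN conjunct2, THEN conjunct2, THEN conjunct1, rule_format] .
lemma phi_one: "\<phi> 1 = 1" using emb_all[THEN conjunct1] .
lemma phi_inj: "inj \<phi>" using emb_all[THEN conjunct2, THEN conjunct2, THEN conjunct2, THEN conjunct1] .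
lemma phi_gr: assumes "g > 0" "x \<in> grK g" shows "\<phi> x \<in> grL g"
proof -
  have "\<forall>g>0. \<phi> ` grK g \<subseteq> grL g" using emb_all[THEN conjunct2, THEN conjunct2, THEN conjunct2, THEN conjunct2] .
  then have "\<phi> ` grK g \<subseteq> grL g" using assms(1) by simp
  then show ?thesis using assms(2) by (rule subsetD[OF _ imageI])
qed
lemma phi_zero: "\<phi> 0 = 0" proof - have "\<phi> 0 + \<phi> 0 = \<phi> 0 + 0" by (metis phi_add add_0_right) then show ?thesis by (rule add_left_imp_eq) qed
lemma phi_neg: "\<phi> (- x) = - \<phi> x" proof - have "\<phi> x + \<phi> (- x) = \<phi> (x + - x)" by (rule phi_add[symmetric]) also have "\<dots> = 0" by (simp add: phi_zero) finally show ?thesis by (rule minus_unique[symmetric]) qed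
lemma phi_hom: "x \<in> homogeneous grK \<Longrightarrow> \<phi> x \<in> homogeneous grL"
  using phi_gr by (auto simp: homogeneous_iff)
lemma phi_eq0: "\<phi> x = 0 \<longleftrightarrow> x = 0" using phi_inj phi_zero by (metis injD)

lemma W_sub: "graded_subring grK W" using val unfolding graded_valuation_ring_def by blast
lemma W0: "0 \<in> W" and W1: "1 \<in> W" and Wadd: "x \<in> W \<Longrightarrow> y \<in> W \<Longrightarrow> x + y \<in> W"
  and Wmul: "x \<in> W \<Longrightarrow> y \<in> W \<Longrightarrow> x * y \<in> W" and Wneg: "x \<in> W \<Longrightarrow> - x \<in> W"
  and Wcomp: "x \<in> W \<Longrightarrow> graded_decomp grK x c \<Longrightarrow> c g \<in> W"
  using W_sub unfolding graded_subring_def by blast+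
lemma Wval: "f \<in> homogeneous grK \<Longrightarrow> f \<noteq> 0 \<Longrightarrow> f \<in> W \<or> (\<exists>u\<in>W. f * u = 1)"
  using val unfolding graded_valuation_ring_def by blast

lemma Wsum: "finite F \<Longrightarrow> (\<And>i. i \<in> F \<Longrightarrow> f i \<in> W) \<Longrightarrow> sum f F \<in> W"
  by (induction F rule: finite_induct) (auto intro: W0 Wadd)

lemma hom_K_1: "1 \<in> homogeneous grK" using gr_one[OF rK] by (auto simp: homogeneous_iff intro!: exI[of _ 1])
lemma hom_K_neg: "x \<in> homogeneous grK \<Longrightarrow> - x \<in> homogeneous grK" using gr_neg[OF rK] unfolding homogeneous_iff by blast
lemma hom_K_neg1: "-1 \<in> homogeneous grK" using hom_K_neg[OF hom_K_1] .
lemma hom_mult_gen: "graded_ring gr \<Longrightarrow> x \<in> homogeneous gr \<Longrightarrow> y \<in> homogeneous gr \<Longrightarrow> x * y \<in> homogeneous gr"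
proof -
  assume gr: "graded_ring gr" and "x \<in> homogeneous gr" "y \<in> homogeneous gr"
  then obtain g h where "g > 0" "h > 0" "x \<in> gr g" "y \<in> gr h" by (auto simp: homogeneous_iff)
  then have "x * y \<in> gr (g * h)" "g * h > 0" using gr_mult[OF gr] by auto
  then show ?thesis by (auto simp: homogeneous_iff)
qed
lemma hom_K_mult: "x \<in> homogeneous grK \<Longrightarrow> y \<in> homogeneous grK \<Longrightarrow> x * y \<in> homogeneous grK"
  using hom_mult_gen[OF rK] .
lemma hom_L_mult: "x \<in> homogeneous grL \<Longrightarrow> y \<in> homogeneous grL \<Longrightarrow> x * y \<in> homogeneous grL"
  using hom_mult_gen[OF rL] .
lemma hom_L_1: "1 \<in> homogeneous grL" using gr_one[OF rL] by (auto simp: homogeneous_iff intro!: exI[of _ 1])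
lemma hom_L_pow: "x \<in> homogeneous grL \<Longrightarrow> x ^ n \<in> homogeneous grL"
  by (induction n) (auto intro: hom_L_mult hom_L_1)
lemma gr1_L_hom: "x \<in> grL 1 \<Longrightarrow> x \<in> homogeneous grL" by (auto simp: homogeneous_iff intro!: exI[of _ 1])

lemma L_inv: "x \<in> homogeneous grL \<Longrightarrow> x \<noteq> 0 \<Longrightarrow> \<exists>u. x * u = 1"
  using fL unfolding graded_field_def by blast
lemma K_inv: "x \<in> homogeneous grK \<Longrightarrow> x \<noteq> 0 \<Longrightarrow> \<exists>u. x * u = 1"
  using fK unfolding graded_field_def by blast
lemma inv_hom_gen: "graded_ring gr \<Longrightarrow> x \<in> homogeneous gr \<Longrightarrow> x * u = 1 \<Longrightarrow> u \<in> homogeneous gr"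
proof -
  assume gr: "graded_ring gr" and "x \<in> homogeneous gr" and xu: "x * u = 1"
  then obtain g where "g > 0" "x \<in> gr g" by (auto simp: homogeneous_iff)
  then have "u \<in> gr (1/g)" "1/g > 0" using inverse_hom[OF gr _ _ xu] by auto
  then show ?thesis unfolding homogeneous_iff by blast
qed
lemma L_inv_hom: "x \<in> homogeneous grL \<Longrightarrow> x * u = 1 \<Longrightarrow> u \<in> homogeneous grL"
  using inv_hom_gen[OF rL] .
lemma K_inv_hom: "x \<in> homogeneous grK \<Longrightarrow> x * u = 1 \<Longrightarrow> u \<in> homogeneous grK"
  using inv_hom_gen[OF rK] .
lemma K_01: "(0::'b) \<noteq> 1" using fK unfolding graded_field_def by blast

abbreviation "M \<equiv> Mset grK W"
abbreviation "Wh \<equiv> W \<inter> homogeneous grK"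

lemma M_W: "m \<in> M \<Longrightarrow> m \<in> W" and M_hom: "m \<in> M \<Longrightarrow> m \<in> homogeneous grK"
  unfolding Mset_def by auto
lemma M_neg: assumes "m \<in> M" shows "- m \<in> M"
proof -
  have "m \<in> W" "m \<in> homogeneous grK" "\<not> (\<exists>u\<in>W. m * u = 1)" using assms unfolding Mset_def by auto
  moreover have "\<not> (\<exists>u\<in>W. - m * u = 1)"
  proof
    assume "\<exists>u\<in>W. - m * u = 1"
    then obtain u where "u \<in> W" "- m * u = 1" by blast
    then have "-u \<in> W" "m * (-u) = 1" using Wneg by auto
    then show False using calculation by blast
  qed
  ultimately show ?thesis unfolding Mset_def using Wneg hom_K_neg by auto
qed

lemma M_mult: assumes "m \<in> M" "w \<in> W" "w * m \<in> homogeneous grK" shows "w * m \<in> M"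
proof -
  have "m \<in> W" "\<not> (\<exists>u\<in>W. m * u = 1)" using assms unfolding Mset_def by auto
  moreover have "\<not> (\<exists>u\<in>W. w * m * u = 1)"
  proof
    assume "\<exists>u\<in>W. w * m * u = 1"
    then obtain u where "u \<in> W" "w * m * u = 1" by blast
    then have "w * u \<in> W" "m * (w * u) = 1" using Wmul assms(2) by (auto simp: ac_simps)
    then show False using calculation by blast
  qed
  ultimately show ?thesis unfolding Mset_def using Wmul assms by auto
qed

end


lemma sum_if_mult: fixes z :: "'a::comm_ring_1" shows "e \<le> N \<Longrightarrow> (\<Sum>i\<le>N. (if i = e then c else 0) * z ^ i) = c * z ^ e"
  by (simp add: if_distrib[where f="\<lambda>x. x * _"] sum.delta cong: if_cong)

lemma reidx: fixes f :: "nat \<Rightarrow> 'a::comm_ring_1"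
  assumes "m \<le> n" "1 \<le> m"
  shows "(\<Sum>i\<le>n-1. (if n - m \<le> i \<and> i < n then f i else 0)) = (\<Sum>j\<in>{1..m}. f (n - j))"
proof -
  have "(\<Sum>i\<le>n-1. (if n - m \<le> i \<and> i < n then f i else 0)) = (\<Sum>i\<in>{n-m..<n}. f i)"
    by (rule sum.mono_neutral_cong_right) (use assms in auto)
  also have "\<dots> = (\<Sum>j\<in>{1..m}. f (n - j))"
    by (rule sum.reindex_bij_witness[of _ "\<lambda>j. n - j" "\<lambda>i. n - i"]) (use assms in auto)
  finally show ?thesis .
qed

lemma pow_cancel: fixes x y :: "'a::comm_ring_1" assumes "x * y = 1" "j \<le> n"
  shows "x ^ n * y ^ j = x ^ (n - j)"
proof -
  have "x ^ n = x ^ (n - j) * x ^ j" using assms(2) by (metis le_add_diff_inverse2 power_add)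
  then have "x ^ n * y ^ j = x ^ (n - j) * (x ^ j * y ^ j)" by (simp add: ac_simps)
  also have "x ^ j * y ^ j = (x * y) ^ j" by (simp add: power_mult_distrib)
  finally show ?thesis using assms(1) by simp
qed

context chev
begin

abbreviation "J \<equiv> Jset grK W \<phi>"
abbreviation "T \<equiv> Tset grK W \<phi>"
abbreviation "P \<equiv> Pfam grK grL W \<phi>"

lemma T_hom: "H \<subseteq> homogeneous grL \<Longrightarrow> T H \<subseteq> homogeneous grL"
  unfolding Tset_def using hom_L_mult phi_hom M_hom by blast

context
  fixes H assumes HP: "H \<in> P"
begin

lemma H_hom: "H \<subseteq> homogeneous grL" and H_Wh: "\<phi> ` Wh \<subseteq> H"
  and H_mult: "a \<in> H \<Longrightarrow> b \<in> H \<Longrightarrow> a * b \<in> H" and H_J: "1 \<notin> J H"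
  using HP unfolding Pfam_def by blast+

lemma H1: "1 \<in> H" using H_Wh W1 hom_K_1 phi_one by force
lemma Hneg: "h \<in> H \<Longrightarrow> - h \<in> H"
proof -
  assume h: "h \<in> H"
  have "\<phi> (-1) \<in> H" using H_Wh Wneg[OF W1] hom_K_neg1 by blast
  then have "\<phi> (-1) * h \<in> H" using H_mult h by blast
  then show ?thesis by (simp add: phi_neg phi_one)
qed
lemma phiM: "m \<in> M \<Longrightarrow> \<phi> m \<in> H" using H_Wh M_W M_hom by blast
lemma T_sub: "T H \<subseteq> H" unfolding Tset_def using H_mult phiM by blast
lemma J_sub: "z \<in> J H \<Longrightarrow> z \<in> asum H" unfolding Jset_def using asum_mono T_sub by blast
lemma A_mult: "x \<in> asum H \<Longrightarrow> y \<in> asum H \<Longrightarrow> x * y \<in> asum H"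
proof -
  assume x: "x \<in> asum H" and y: "y \<in> asum H"
  have ax: "\<And>a. a \<in> H \<Longrightarrow> a * x \<in> asum H"
    by (rule asum_lmult[OF _ x]) (auto intro: H_mult)
  show ?thesis by (rule asum_lmult[OF _ y]) (simp add: mult.commute ax)
qed
lemma A_1: "1 \<in> asum H" using H1 by blast
lemma A_neg: "x \<in> asum H \<Longrightarrow> - x \<in> asum H"
proof -
  assume x: "x \<in> asum H"
  have "(-1) * x \<in> asum H" by (rule asum_lmult[OF _ x]) (use Hneg H1 H_mult in force)
  then show ?thesis by simp
qed
lemma A_pow: "x \<in> asum H \<Longrightarrow> x ^ k \<in> asum H"
  by (induction k) (auto intro: A_1 A_mult)
lemma J_add: "x \<in> J H \<Longrightarrow> y \<in> J H \<Longrightarrow> x + y \<in> J H" unfolding Jset_def by (rule asum_plus)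
lemma J_0: "0 \<in> J H" unfolding Jset_def by blast
lemma T_J: "r \<in> H \<Longrightarrow> m \<in> M \<Longrightarrow> r * \<phi> m \<in> J H" unfolding Jset_def Tset_def by blast
lemma J_multH: "a \<in> H \<Longrightarrow> z \<in> J H \<Longrightarrow> a * z \<in> J H"
  unfolding Jset_def
proof (rule asum_lmult)
  fix t assume a: "a \<in> H" and "t \<in> T H"
  then obtain r m where "t = r * \<phi> m" "r \<in> H" "m \<in> M" unfolding Tset_def by blast
  then have "a * t = (a * r) * \<phi> m" "a * r \<in> H" using H_mult a by (auto simp: ac_simps)
  then show "a * t \<in> asum (T H)" unfolding Tset_def using \<open>m \<in> M\<close> by blast
qed
lemma J_multA: "c \<in> asum H \<Longrightarrow> z \<in> J H \<Longrightarrow> c * z \<in> J H"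
proof -
  assume c: "c \<in> asum H" and z: "z \<in> J H"
  have "z * c \<in> asum (T H)"
    by (rule asum_lmult[OF _ c]) (use J_multH z in \<open>auto simp: Jset_def mult.commute\<close>)
  then show ?thesis by (simp add: Jset_def mult.commute)
qed
lemma J_sum: "finite F \<Longrightarrow> (\<And>i. i \<in> F \<Longrightarrow> f i \<in> J H) \<Longrightarrow> sum f F \<in> J H"
  unfolding Jset_def by (rule asum_sum)

end

lemma adj_P_but: assumes HP: "H \<in> P" and z: "z \<in> homogeneous grL"
  shows "adj H z \<subseteq> homogeneous grL" "\<phi> ` Wh \<subseteq> adj H z" "H \<subseteq> adj H z"
    "\<forall>a\<in>adj H z. \<forall>b\<in>adj H z. a * b \<in> adj H z" "z \<in> adj H z"
proof -
  show "adj H z \<subseteq> homogeneous grL" unfolding adj_def using H_hom[OF HP] hom_L_pow[OF z] hom_L_mult by blast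
  show Hsub: "H \<subseteq> adj H z" unfolding adj_def by (force intro: exI[of _ 0])
  then show "\<phi> ` Wh \<subseteq> adj H z" using H_Wh[OF HP] by blast
  show "\<forall>a\<in>adj H z. \<forall>b\<in>adj H z. a * b \<in> adj H z"
  proof (intro ballI)
    fix a b assume "a \<in> adj H z" "b \<in> adj H z"
    then obtain h e h' e' where "a = h * z ^ e" "b = h' * z ^ e'" "h \<in> H" "h' \<in> H" unfolding adj_def by blast
    then have "a * b = (h * h') * z ^ (e + e')" "h * h' \<in> H" using H_mult[OF HP] by (auto simp: power_add ac_simps)
    then show "a * b \<in> adj H z" unfolding adj_def by blast
  qed
  show "z \<in> adj H z" unfolding adj_def using H1[OF HP] by (force intro: exI[of _ 1])
qed

context
  fixes H assumes HP: "H \<in> P" and Hmax: "\<forall>H'\<in>P. H \<subseteq> H' \<longrightarrow> H' = H"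
begin

lemma adjoin: assumes z: "z \<in> homogeneous grL" "z \<notin> H" shows "1 \<in> J (adj H z)"
proof (rule ccontr)
  assume "1 \<notin> J (adj H z)"
  then have "adj H z \<in> P" using adj_P_but[OF HP z(1)] unfolding Pfam_def by blast
  then have "adj H z = H" using Hmax adj_P_but(3)[OF HP z(1)] by blast
  then show False using adj_P_but(5)[OF HP z(1)] z(2) by blast
qed

lemma rep: assumes z: "z \<in> homogeneous grL" "z \<notin> H" shows "\<exists>n a. Rel grK W \<phi> grL H z n a"
proof -
  have one: "1 \<in> asum (T (adj H z))" using adjoin[OF z] unfolding Jset_def .
  have Th: "T (adj H z) \<subseteq> homogeneous grL" by (rule T_hom[OF adj_P_but(1)[OF HP z(1)]])
  have one1: "1 \<in> asum (T (adj H z) \<inter> grL 1)" by (rule proj[OF rL Th one]) (auto simp: gr_one[OF rL])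
  have "\<exists>n a. (\<forall>i. a i \<in> J H) \<and> (\<forall>i. a i * z ^ i \<in> grL 1) \<and> (\<forall>i>n. a i = 0) \<and> w = (\<Sum>i\<le>n. a i * z ^ i)"
    if "w \<in> asum (T (adj H z) \<inter> grL 1)" for w
    using that
  proof (induction w rule: asum.induct)
    case asum_0
    show ?case by (rule exI[of _ 0], rule exI[of _ "\<lambda>_. 0"]) (auto simp: gr_zero[OF rL] J_0[OF HP])
  next
    case (asum_add t w)
    obtain n a where IH: "\<forall>i. a i \<in> J H" "\<forall>i. a i * z ^ i \<in> grL 1" "\<forall>i>n. a i = 0" "w = (\<Sum>i\<le>n. a i * z ^ i)"
      using asum_add.IH by blast
    obtain h e m where t: "t = h * z ^ e * \<phi> m" "h \<in> H" "m \<in> M" "t \<in> grL 1"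
      using asum_add.hyps(1) unfolding Tset_def adj_def by blast
    define a' where "a' = (\<lambda>i. a i + (if i = e then h * \<phi> m else 0))"
    have hm: "h * \<phi> m \<in> J H" using T_J[OF HP t(2,3)] .
    have "\<forall>i. a' i \<in> J H" unfolding a'_def using IH(1) hm J_add[OF HP] J_0[OF HP] by auto
    moreover have "\<forall>i. a' i * z ^ i \<in> grL 1"
    proof
      fix i
      have "a' i * z ^ i = a i * z ^ i + (if i = e then t else 0)"
        unfolding a'_def t(1) by (auto simp: algebra_simps)
      then show "a' i * z ^ i \<in> grL 1" using IH(2) t(4) gr_add[OF rL, of 1] gr_zero[OF rL, of 1] by auto
    qed
    moreover have "\<forall>i>max n e. a' i = 0" unfolding a'_def using IH(3) by auto
    moreover have "t + w = (\<Sum>i\<le>max n e. a' i * z ^ i)"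
    proof -
      have "(\<Sum>i\<le>max n e. a' i * z ^ i) = (\<Sum>i\<le>max n e. a i * z ^ i) + (\<Sum>i\<le>max n e. (if i = e then h * \<phi> m else 0) * z ^ i)"
        unfolding a'_def by (simp add: distrib_right sum.distrib)
      also have "(\<Sum>i\<le>max n e. a i * z ^ i) = w" using polysum_ext[OF IH(3), of "max n e" z] IH(4) by simp
      also have "(\<Sum>i\<le>max n e. (if i = e then h * \<phi> m else 0) * z ^ i) = h * \<phi> m * z ^ e"
        by (rule sum_if_mult) simp
      finally show ?thesis using t(1) by (simp add: ac_simps)
    qed
    ultimately show ?case by blast
  qed
  from this[OF one1] show ?thesis unfolding Rel_def by blast
qed

lemma sinv: assumes R: "Rel grK W \<phi> grL H y m b"
  shows "\<exists>s'. (1 - b 0) * s' = 1 \<and> s' \<in> H \<and> s' \<in> grL 1"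
proof -
  have bJ: "\<And>i. b i \<in> J H" and bgr: "\<And>i. b i * y ^ i \<in> grL 1" using R unfolding Rel_def by auto
  have b0: "b 0 \<in> J H" "b 0 \<in> grL 1" using bJ[of 0] bgr[of 0] by auto
  define s where "s = 1 - b 0"
  have sgr: "s \<in> grL 1" unfolding s_def using gr_add[OF rL, of 1 1 "- b 0"] gr_neg[OF rL, of 1] b0 gr_one[OF rL] by simp
  have "s \<noteq> 0"
  proof
    assume "s = 0" then have "b 0 = 1" unfolding s_def by simp
    then show False using b0 H_J[OF HP] by simp
  qed
  then obtain s' where ss': "s * s' = 1" using L_inv gr1_L_hom[OF sgr] by blast
  have s'gr: "s' \<in> grL 1" using inverse_hom[OF rL _ sgr ss'] by simp
  have sA: "s \<in> asum H" unfolding s_def using asum_plus[OF A_1[OF HP] A_neg[OF HP J_sub[OF HP b0(1)]]] by simp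
  have "s' \<in> H"
  proof (rule ccontr)
    assume "s' \<notin> H"
    then obtain N c where Rc: "Rel grK W \<phi> grL H s' N c" using rep gr1_L_hom[OF s'gr] by blast
    then have cJ: "\<And>i. c i \<in> J H" and c1: "1 = (\<Sum>i\<le>N. c i * s' ^ i)" unfolding Rel_def by auto
    have "s ^ N = (\<Sum>i\<le>N. c i * s' ^ i) * s ^ N" using c1 by simp
    also have "\<dots> = (\<Sum>i\<le>N. c i * s ^ (N - i))"
      unfolding sum_distrib_right
    proof (rule sum.cong[OF refl])
      fix i assume "i \<in> {..N}"
      then have "s ^ N * s' ^ i = s ^ (N - i)" using pow_cancel[OF ss'] by simp
      then show "c i * s' ^ i * s ^ N = c i * s ^ (N - i)" by (simp add: ac_simps)
    qed
    also have "\<dots> \<in> J H"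
      by (rule J_sum[OF HP]) (use J_multA[OF HP A_pow[OF HP sA] cJ] in \<open>auto simp: mult.commute\<close>)
    finally have sN: "s ^ N \<in> J H" .
    have "1 - s ^ N = (1 - s) * (\<Sum>i<N. s ^ i)" by (rule one_diff_power_eq)
    also have "\<dots> = (\<Sum>i<N. s ^ i) * b 0" unfolding s_def by (simp add: mult.commute)
    also have "\<dots> \<in> J H" by (rule J_multA[OF HP _ b0(1)]) (auto intro!: asum_sum A_pow[OF HP sA])
    finally have "s ^ N + (1 - s ^ N) \<in> J H" using J_add[OF HP sN] by blast
    then show False using H_J[OF HP] by simp
  qed
  then show ?thesis using ss' s'gr unfolding s_def by blast
qed

end
end


context chev
begin

context
  fixes H assumes HP: "H \<in> P" and Hmax: "\<forall>H'\<in>P. H \<subseteq> H' \<longrightarrow> H' = H"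
begin

lemma reduce:
  assumes Rx: "Rel grK W \<phi> grL H x n a" and Ry: "Rel grK W \<phi> grL H y m b"
    and xy: "x * y = 1" and mn: "m \<le> n"
  shows "\<exists>n'<n. \<exists>a'. Rel grK W \<phi> grL H x n' a'"
proof -
  have aJ: "\<And>i. a i \<in> J H" and agr: "\<And>i. a i * x ^ i \<in> grL 1" and a0: "\<And>i. i > n \<Longrightarrow> a i = 0"
    and a1: "1 = (\<Sum>i\<le>n. a i * x ^ i)" using Rx unfolding Rel_def by auto
  have bJ: "\<And>i. b i \<in> J H" and bgr: "\<And>i. b i * y ^ i \<in> grL 1"
    and b1: "1 = (\<Sum>i\<le>m. b i * y ^ i)" using Ry unfolding Rel_def by auto
  have m1: "1 \<le> m"
  proof (rule ccontr)
    assume "\<not> 1 \<le> m" then have "m = 0" by simp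
    then have "1 = b 0" using b1 by simp
    then show False using bJ[of 0] H_J[OF HP] by simp
  qed
  with mn have n1: "1 \<le> n" by simp
  obtain s' where s': "(1 - b 0) * s' = 1" "s' \<in> H" "s' \<in> grL 1" using sinv[OF HP Hmax Ry] by blast
  have seq: "1 - b 0 = (\<Sum>j\<in>{1..m}. b j * y ^ j)"
  proof -
    have "{..m} = insert 0 {1..m}" by auto
    then have "(\<Sum>i\<le>m. b i * y ^ i) = b 0 + (\<Sum>j\<in>{1..m}. b j * y ^ j)" by simp
    then show ?thesis using b1 by (simp add: algebra_simps)
  qed
  define a' where "a' = (\<lambda>i. (if i < n then a i else 0) + (if n - m \<le> i \<and> i < n then a n * s' * b (n - i) else 0))"
  have "\<forall>i. a' i \<in> J H"
  proof
    fix i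
    have "s' * b (n - i) \<in> J H" using J_multH[OF HP s'(2) bJ] .
    then have "a n * (s' * b (n - i)) \<in> J H" using J_multA[OF HP J_sub[OF HP aJ[of n]]] by blast
    then show "a' i \<in> J H" unfolding a'_def using aJ J_add[OF HP] J_0[OF HP] by (auto simp: ac_simps)
  qed
  moreover have "\<forall>i. a' i * x ^ i \<in> grL 1"
  proof
    fix i
    have p1: "(if i < n then a i else 0) * x ^ i \<in> grL 1" using agr gr_zero[OF rL, of 1] by auto
    have p2: "(if n - m \<le> i \<and> i < n then a n * s' * b (n - i) else 0) * x ^ i \<in> grL 1"
    proof (cases "n - m \<le> i \<and> i < n")
      case True
      have "x ^ n * y ^ (n - i) = x ^ i" using pow_cancel[OF xy, of "n - i" n] True by simp
      then have "a n * s' * b (n - i) * x ^ i = s' * ((a n * x ^ n) * (b (n - i) * y ^ (n - i)))"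
        by (metis (no_types, lifting) mult.assoc mult.left_commute)
      also have "\<dots> \<in> grL 1" using gr_mult1[OF rL s'(3) gr_mult1[OF rL agr bgr]] .
      finally show ?thesis using True by simp
    next
      case False
      show ?thesis by (subst if_not_P[OF False]) (simp add: gr_zero[OF rL])
    qed
    show "a' i * x ^ i \<in> grL 1" unfolding a'_def distrib_right using gr_add[OF rL _ p1 p2] by simp
  qed
  moreover have "\<forall>i>n - 1. a' i = 0" unfolding a'_def by auto
  moreover have "1 = (\<Sum>i\<le>n - 1. a' i * x ^ i)"
  proof -
    have "(\<Sum>i\<le>n - 1. a' i * x ^ i) = (\<Sum>i\<le>n - 1. (if i < n then a i else 0) * x ^ i)
        + (\<Sum>i\<le>n - 1. (if n - m \<le> i \<and> i < n then a n * s' * b (n - i) * x ^ i else 0))"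
      unfolding a'_def distrib_right sum.distrib by (simp add: if_distrib[where f="\<lambda>t. t * _"] cong: if_cong)
    also have "(\<Sum>i\<le>n - 1. (if i < n then a i else 0) * x ^ i) = (\<Sum>i<n. a i * x ^ i)"
    proof -
      have "{..n - 1} = {..<n}" using n1 by auto
      then show ?thesis by (simp only:) (intro sum.cong; simp)
    qed
    also have "(\<Sum>i\<le>n - 1. (if n - m \<le> i \<and> i < n then a n * s' * b (n - i) * x ^ i else 0))
        = (\<Sum>j\<in>{1..m}. a n * s' * b (n - (n - j)) * x ^ (n - j))"
      by (rule reidx[OF mn m1])
    also have "\<dots> = (\<Sum>j\<in>{1..m}. a n * x ^ n * s' * (b j * y ^ j))"
    proof (rule sum.cong[OF refl])
      fix j assume j: "j \<in> {1..m}"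
      then have "n - (n - j) = j" using mn by auto
      moreover have "x ^ (n - j) = x ^ n * y ^ j" using pow_cancel[OF xy, of j n] j mn by simp
      ultimately show "a n * s' * b (n - (n - j)) * x ^ (n - j) = a n * x ^ n * s' * (b j * y ^ j)"
        by (simp add: ac_simps)
    qed
    also have "\<dots> = a n * x ^ n * (s' * (1 - b 0))" unfolding seq by (simp add: sum_distrib_left ac_simps)
    also have "\<dots> = a n * x ^ n" using s'(1) by (simp add: ac_simps)
    finally have "(\<Sum>i\<le>n - 1. a' i * x ^ i) = (\<Sum>i<n. a i * x ^ i) + a n * x ^ n" .
    also have "\<dots> = (\<Sum>i\<le>n. a i * x ^ i)" by (simp add: lessThan_Suc_atMost[symmetric])
    finally show ?thesis using a1 by simp
  qed
  ultimately have "Rel grK W \<phi> grL H x (n - 1) a'" unfolding Rel_def by blast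
  then show ?thesis using n1 by (intro exI[of _ "n - 1"]) auto
qed

lemma H_val: assumes x: "x \<in> homogeneous grL" "x \<noteq> 0" shows "x \<in> H \<or> (\<exists>y\<in>H. x * y = 1)"
proof (rule ccontr)
  assume nx: "\<not> (x \<in> H \<or> (\<exists>y\<in>H. x * y = 1))"
  obtain y where xy: "x * y = 1" using L_inv[OF x] by blast
  have y: "y \<in> homogeneous grL" "y \<notin> H" using L_inv_hom[OF x(1) xy] nx xy by auto
  have yx: "y * x = 1" using xy by (simp add: mult.commute)
  have "\<exists>n. \<exists>a. Rel grK W \<phi> grL H x n a" using rep[OF HP Hmax x(1)] nx by blast
  then obtain n a where Ra: "Rel grK W \<phi> grL H x n a" and nmin: "\<forall>n'<n. \<not> (\<exists>a. Rel grK W \<phi> grL H x n' a)"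
    using exists_least_iff[where P="\<lambda>n. \<exists>a. Rel grK W \<phi> grL H x n a"] by blast
  have "\<exists>m. \<exists>b. Rel grK W \<phi> grL H y m b" using rep[OF HP Hmax y] by blast
  then obtain m b where Rb: "Rel grK W \<phi> grL H y m b" and mmin: "\<forall>m'<m. \<not> (\<exists>b. Rel grK W \<phi> grL H y m' b)"
    using exists_least_iff[where P="\<lambda>m. \<exists>b. Rel grK W \<phi> grL H y m b"] by blast
  show False
  proof (cases "m \<le> n")
    case True
    then show False using reduce[OF Ra Rb xy] nmin by blast
  next
    case False
    then show False using reduce[OF Rb Ra yx] mmin by auto
  qed
qed

end
end


context chev
begin

lemma W_asum: assumes w: "w \<in> W" shows "w \<in> asum Wh"
proof -
  obtain c where c: "graded_decomp grK w c" using gr_ex[OF rK] by blast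
  let ?F = "{g. c g \<noteq> 0}"
  have fin: "finite ?F" and weq: "w = sum c ?F" and pos: "\<And>g. g \<in> ?F \<Longrightarrow> g > 0"
    and cg: "\<And>g. g > 0 \<Longrightarrow> c g \<in> grK g"
    using c unfolding graded_decomp_def by (auto simp: not_le[symmetric])
  have "sum c ?F \<in> asum Wh"
  proof (rule asum_sum[OF fin])
    fix g assume g: "g \<in> ?F"
    have "c g \<in> W" using Wcomp[OF w c] .
    moreover have "c g \<in> homogeneous grK" using cg[OF pos[OF g]] pos[OF g] unfolding homogeneous_iff by blast
    ultimately show "c g \<in> asum Wh" by blast
  qed
  then show ?thesis using weq by simp
qed

lemma phi_asum: "z \<in> asum S \<Longrightarrow> \<phi> z \<in> asum (\<phi> ` S)"
  by (rule asum_image[OF phi_add])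

lemma phi_sum: "finite F \<Longrightarrow> \<phi> (sum f F) = (\<Sum>i\<in>F. \<phi> (f i))"
  by (induction F rule: finite_induct) (auto simp: phi_zero phi_add)

lemma decomp_phi: assumes c: "graded_decomp grK b c" shows "graded_decomp grL (\<phi> b) (\<lambda>g. \<phi> (c g))"
proof -
  have eqF: "{g. \<phi> (c g) \<noteq> 0} = {g. c g \<noteq> 0}" using phi_eq0 by auto
  show ?thesis using c unfolding graded_decomp_def eqF
    by (auto simp: phi_gr phi_zero phi_sum)
qed

lemma T_mono: "A \<subseteq> B \<Longrightarrow> T A \<subseteq> T B" unfolding Tset_def by blast

lemma chain_union: assumes Cne: "C \<noteq> {}" and ch: "subset.chain P C" shows "\<Union>C \<in> P"
proof -
  have CP: "C \<subseteq> P" and tot: "\<forall>X\<in>C. \<forall>Y\<in>C. X \<subseteq> Y \<or> Y \<subseteq> X" using ch unfolding subset_chain_def by auto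
  have "\<Union>C \<subseteq> homogeneous grL" using CP unfolding Pfam_def by blast
  moreover have "\<phi> ` Wh \<subseteq> \<Union>C" using CP Cne unfolding Pfam_def by blast
  moreover have "\<forall>a\<in>\<Union>C. \<forall>b\<in>\<Union>C. a * b \<in> \<Union>C"
  proof (intro ballI)
    fix a b assume "a \<in> \<Union>C" "b \<in> \<Union>C"
    then obtain A B where AB: "A \<in> C" "B \<in> C" "a \<in> A" "b \<in> B" by blast
    show "a * b \<in> \<Union>C"
    proof (cases "A \<subseteq> B")
      case True then show ?thesis using AB CP H_mult[of B] by blast
    next
      case False then have "B \<subseteq> A" using tot AB by blast
      then show ?thesis using AB CP H_mult[of A] by blast
    qed
  qed
  moreover have "1 \<notin> J (\<Union>C)"
  proof
    assume "1 \<in> J (\<Union>C)"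
    have "\<exists>A\<in>C. z \<in> asum (T A)" if "z \<in> asum (T (\<Union>C))" for z
      using that
    proof (induction z rule: asum.induct)
      case asum_0 then show ?case using Cne by blast
    next
      case (asum_add t z)
      obtain r m where t: "t = r * \<phi> m" "r \<in> \<Union>C" "m \<in> M" using asum_add.hyps(1) unfolding Tset_def by blast
      obtain A where A: "A \<in> C" "r \<in> A" using t(2) by blast
      obtain B where B: "B \<in> C" "z \<in> asum (T B)" using asum_add.IH by blast
      show ?case
      proof (cases "A \<subseteq> B")
        case True
        then have "t \<in> T B" using t A unfolding Tset_def by blast
        then show ?thesis using B by blast
      next
        case False then have "B \<subseteq> A" using tot A B by blast
        then have "z \<in> asum (T A)" using B asum_mono[OF T_mono] by blast
        moreover have "t \<in> T A" using t A unfolding Tset_def by blast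
        ultimately show ?thesis using A by blast
      qed
    qed
    then obtain A where "A \<in> C" "1 \<in> J A" using \<open>1 \<in> J (\<Union>C)\<close> unfolding Jset_def by blast
    then show False using CP H_J by blast
  qed
  ultimately show ?thesis unfolding Pfam_def by blast
qed

lemma gr1_K_hom: "x \<in> grK 1 \<Longrightarrow> x \<in> homogeneous grK" unfolding homogeneous_iff using zero_less_one by blast

lemma M0: "0 \<in> M"
proof -
  have "0 \<in> homogeneous grK" using gr_zero[OF rK, of 1] gr1_K_hom by simp
  then show ?thesis unfolding Mset_def using W0 K_01 by auto
qed

lemma M1_add: assumes a: "a \<in> M" "a \<in> grK 1" and b: "b \<in> M" "b \<in> grK 1"
  shows "a + b \<in> M"
proof -
  have abgr: "a + b \<in> grK 1" using gr_add[OF rK _ a(2) b(2)] by simp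
  then have abh: "a + b \<in> homogeneous grK" by (rule gr1_K_hom)
  show ?thesis
  proof (cases "a = 0 \<or> b = 0")
    case True then show ?thesis using a b by auto
  next
    case False
    then have a0: "a \<noteq> 0" and b0: "b \<noteq> 0" by auto
    have bh: "b \<in> homogeneous grK" using M_hom[OF b(1)] .
    obtain b' where bb': "b * b' = 1" using K_inv[OF bh b0] by blast
    have b'gr: "b' \<in> grK 1" using inverse_hom[OF rK _ b(2) bb'] by simp
    define q where "q = a * b'"
    have qgr: "q \<in> grK 1" unfolding q_def using gr_mult1[OF rK a(2) b'gr] .
    have qb: "q * b = a" unfolding q_def using bb' by (simp add: ac_simps)
    have q0: "q \<noteq> 0" using qb a0 by auto
    have "q \<in> W \<or> (\<exists>u\<in>W. q * u = 1)"
      using Wval[OF gr1_K_hom[OF qgr] q0] .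
    then show ?thesis
    proof
      assume qW: "q \<in> W"
      have "a + b = (q + 1) * b" using qb by (simp add: algebra_simps)
      then show ?thesis using M_mult[OF b(1) Wadd[OF qW W1]] abh by simp
    next
      assume "\<exists>u\<in>W. q * u = 1"
      then obtain u where u: "u \<in> W" "q * u = 1" by blast
      have "b = b * (q * u)" using u by simp
      also have "\<dots> = (q * b) * u" by (simp add: ac_simps)
      also have "\<dots> = a * u" using qb by simp
      finally have "a + b = (1 + u) * a" by (simp add: algebra_simps)
      then show ?thesis using M_mult[OF a(1) Wadd[OF W1 u(1)]] abh by simp
    qed
  qed
qed

lemma P_nonempty: "\<phi> ` Wh \<in> P"
proof -
  have "\<phi> ` Wh \<subseteq> homogeneous grL" using phi_hom by blast
  moreover have "\<forall>a\<in>\<phi> ` Wh. \<forall>b\<in>\<phi> ` Wh. a * b \<in> \<phi> ` Wh"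
  proof (intro ballI)
    fix a b assume "a \<in> \<phi> ` Wh" "b \<in> \<phi> ` Wh"
    then obtain a0 b0 where "a = \<phi> a0" "b = \<phi> b0" "a0 \<in> Wh" "b0 \<in> Wh" by blast
    then have "a * b = \<phi> (a0 * b0)" "a0 * b0 \<in> Wh" using phi_mult Wmul hom_K_mult by auto
    then show "a * b \<in> \<phi> ` Wh" by blast
  qed
  moreover have "1 \<notin> J (\<phi> ` Wh)"
  proof
    assume one: "1 \<in> J (\<phi> ` Wh)"
    have TM: "T (\<phi> ` Wh) \<subseteq> \<phi> ` M"
    proof
      fix t assume "t \<in> T (\<phi> ` Wh)"
      then obtain w m where "t = \<phi> w * \<phi> m" "w \<in> Wh" "m \<in> M" unfolding Tset_def by blast
      then have "t = \<phi> (w * m)" "w * m \<in> M" using M_mult[of m w] hom_K_mult[of w m] M_hom[of m] by (auto simp: phi_mult)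
      then show "t \<in> \<phi> ` M" by blast
    qed
    have "asum (\<phi> ` M) \<subseteq> \<phi> ` asum M"
    proof
      fix z assume "z \<in> asum (\<phi> ` M)"
      then show "z \<in> \<phi> ` asum M"
      proof (rule asum_closed[rotated 2])
        have "\<phi> 0 \<in> \<phi> ` asum M" by (rule imageI) (rule asum_0)
        then show "0 \<in> \<phi> ` asum M" by (simp only: phi_zero)
      next
        fix a b assume "a \<in> \<phi> ` M" "b \<in> \<phi> ` asum M"
        then obtain a0 b0 where "a = \<phi> a0" "b = \<phi> b0" "a0 \<in> M" "b0 \<in> asum M" by blast
        then have "a + b = \<phi> (a0 + b0)" "a0 + b0 \<in> asum M" by (simp_all add: phi_add asum_add)
        then show "a + b \<in> \<phi> ` asum M" by blast
      qed
    qed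
    have "asum (T (\<phi> ` Wh)) \<subseteq> asum (\<phi> ` M)" using asum_mono[OF TM] by blast
    then have "1 \<in> \<phi> ` asum M" using one \<open>asum (\<phi> ` M) \<subseteq> \<phi> ` asum M\<close> unfolding Jset_def by (meson subsetD)
    then obtain z where z: "1 = \<phi> z" "z \<in> asum M" by (rule imageE)
    have "\<phi> z = \<phi> 1" unfolding phi_one using z(1) by (rule sym)
    then have "z = 1" using phi_inj by (rule injD[rotated])
    then have "1 \<in> asum M" using z(2) by (simp only:)
    moreover have "M \<subseteq> homogeneous grK" using M_hom by blast
    ultimately have "1 \<in> asum (M \<inter> grK 1)"
      using proj[OF rK _ _ _ gr_one[OF rK]] by simp
    moreover have "asum (M \<inter> grK 1) \<subseteq> M \<inter> grK 1"
    proof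
      fix z assume "z \<in> asum (M \<inter> grK 1)"
      then show "z \<in> M \<inter> grK 1"
      proof (rule asum_closed[rotated 2])
        show "0 \<in> M \<inter> grK 1" using M0 gr_zero[OF rK, of 1] by simp
      next
        fix a b assume "a \<in> M \<inter> grK 1" "b \<in> M \<inter> grK 1"
        then show "a + b \<in> M \<inter> grK 1" using M1_add[of a b] gr_add[OF rK, of 1 a b] by simp
      qed
    qed
    ultimately have "1 \<in> M" by (meson IntD1 subsetD)
    then have "\<not> (\<exists>u\<in>W. 1 * u = 1)" unfolding Mset_def by simp
    then show False using W1 by simp
  qed
  ultimately show ?thesis unfolding Pfam_def by blast
qed

lemma chevalley: "\<exists>V. graded_valuation_ring grL V \<and> {b. \<phi> b \<in> V} = W"
proof -
  obtain H where HP: "H \<in> P" and Hmax: "\<forall>H'\<in>P. H \<subseteq> H' \<longrightarrow> H' = H"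
    using subset_Zorn_nonempty[of P] P_nonempty chain_union by blast
  define V where "V = asum H"
  have Vsub: "graded_subring grL V"
    unfolding graded_subring_def V_def
  proof (intro conjI ballI allI impI)
    show "0 \<in> asum H" by blast
    show "1 \<in> asum H" by (rule A_1[OF HP])
    fix x y assume "x \<in> asum H" "y \<in> asum H"
    then show "x + y \<in> asum H" "x * y \<in> asum H" using asum_plus A_mult[OF HP] by auto
  next
    fix x assume "x \<in> asum H" then show "- x \<in> asum H" by (rule A_neg[OF HP])
  next
    fix x c g assume x: "x \<in> asum H" and c: "graded_decomp grL x c"
    obtain c' where c': "graded_decomp grL x c'" "\<forall>g>0. c' g \<in> asum (H \<inter> grL g)"
      using decomp_asum[OF rL H_hom[OF HP] x] by blast
    have "c = c'" using gr_uniq[OF rL c c'(1)] .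
    show "c g \<in> asum H"
    proof (cases "g > 0")
      case True then show ?thesis using c'(2) \<open>c = c'\<close> asum_mono[of "H \<inter> grL g" H] by blast
    next
      case False then have "c g = 0" using c unfolding graded_decomp_def by auto
      then show ?thesis by auto
    qed
  qed
  have Vval: "graded_valuation_ring grL V"
    unfolding graded_valuation_ring_def
  proof (intro conjI Vsub ballI impI)
    fix f assume "f \<in> homogeneous grL" "f \<noteq> 0"
    then show "f \<in> V \<or> (\<exists>u\<in>V. f * u = 1)" using H_val[OF HP Hmax] unfolding V_def by blast
  qed
  have "{b. \<phi> b \<in> V} = W"
  proof (intro equalityI subsetI)
    fix w assume "w \<in> W"
    then have "\<phi> w \<in> asum (\<phi> ` Wh)" using phi_asum W_asum by blast
    then show "w \<in> {b. \<phi> b \<in> V}" unfolding V_def using asum_mono[OF H_Wh[OF HP]] by blast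
  next
    fix b assume "b \<in> {b. \<phi> b \<in> V}"
    then have bV: "\<phi> b \<in> V" by simp
    show "b \<in> W"
    proof (rule ccontr)
      assume bW: "b \<notin> W"
      obtain c where c: "graded_decomp grK b c" using gr_ex[OF rK] by blast
      have "\<exists>g. c g \<notin> W"
      proof (rule ccontr)
        assume "\<not> (\<exists>g. c g \<notin> W)"
        then have "sum c {g. c g \<noteq> 0} \<in> W" by (intro Wsum) (use c in \<open>auto simp: graded_decomp_def\<close>)
        then show False using bW c unfolding graded_decomp_def by auto
      qed
      then obtain g where g: "c g \<notin> W" by blast
      then have "c g \<noteq> 0" using W0 by auto
      then have gpos: "g > 0" using c unfolding graded_decomp_def by (meson not_le)
      have cgh: "c g \<in> homogeneous grK" using c gpos unfolding graded_decomp_def homogeneous_iff by blast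
      obtain u where u: "u \<in> W" "c g * u = 1" using Wval[OF cgh \<open>c g \<noteq> 0\<close>] g by blast
      have uM: "u \<in> M"
      proof -
        have "u \<in> homogeneous grK" using K_inv_hom[OF cgh u(2)] .
        moreover have "\<not> (\<exists>u'\<in>W. u * u' = 1)"
        proof
          assume "\<exists>u'\<in>W. u * u' = 1"
          then obtain u' where u': "u' \<in> W" "u * u' = 1" by blast
          have "u' = u' * (c g * u)" using u by simp
          also have "\<dots> = c g * (u * u')" by (simp add: ac_simps)
          finally have "u' = c g" using u' by simp
          then show False using u' g by simp
        qed
        ultimately show ?thesis unfolding Mset_def using u by blast
      qed
      have "\<phi> (c g) \<in> V" using Vsub bV decomp_phi[OF c] unfolding graded_subring_def by blast
      then have "\<phi> u * \<phi> (c g) \<in> J H" unfolding V_def Jset_def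
      proof (rule asum_lmult[where S=H, rotated])
        fix a assume "a \<in> H"
        then have "\<phi> u * a \<in> T H" unfolding Tset_def using uM by (auto simp: mult.commute)
        then show "\<phi> u * a \<in> asum (T H)" by blast
      qed
      moreover have "\<phi> u * \<phi> (c g) = 1" using u(2) phi_mult[symmetric] phi_one by (simp add: mult.commute)
      ultimately show False using H_J[OF HP] by simp
    qed
  qed
  then show ?thesis using Vval by blast
qed

end

lemma chevalley_global:
  assumes "graded_field grK" "graded_field grL" "graded_embedding grK grL \<phi>" "graded_valuation_ring grK W"
  shows "\<exists>V. graded_valuation_ring grL V \<and> {b. \<phi> b \<in> V} = W"
  using chev.chevalley[OF chev.intro[OF assms]] .



lemma top_Pspace: "topspace (Pspace gr \<iota>) = Pset gr \<iota>"
proof -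
  have "Pset gr \<iota> \<in> {{V \<in> Pset gr \<iota>. F \<subseteq> V} | F. finite F \<and> F \<subseteq> homogeneous gr}"
    by (rule CollectI, rule exI[of _ "{}"]) auto
  then show ?thesis unfolding Pspace_def topology_generated_by_topspace by blast
qed

lemma ext_val:
  assumes "graded_field grY" "graded_field grX" "graded_embedding grY grX \<phi>"
    and comp: "\<forall>a. \<phi> (\<iota>Y a) = \<iota>X a" and W: "W \<in> Pset grY \<iota>Y"
  shows "\<exists>V\<in>Pset grX \<iota>X. {b. \<phi> b \<in> V} = W"
proof -
  have Wv: "graded_valuation_ring grY W" and Wi: "range \<iota>Y \<subseteq> W" using W unfolding Pset_def by auto
  obtain V where V: "graded_valuation_ring grX V" "{b. \<phi> b \<in> V} = W"
    using chevalley_global[OF assms(1-3) Wv] by blast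
  have "range \<iota>X \<subseteq> V"
  proof
    fix t assume "t \<in> range \<iota>X"
    then obtain a where "t = \<iota>X a" by blast
    moreover have "\<iota>Y a \<in> W" using Wi by blast
    ultimately show "t \<in> V" using V(2) comp by auto
  qed
  then show ?thesis using V unfolding Pset_def by blast
qed

lemma obj_pi: "bir_obj grk grK \<iota> X \<pi> \<Longrightarrow> x \<in> topspace X \<Longrightarrow> \<pi> x \<in> Pset grK \<iota>"
  unfolding bir_obj_def local_homeomorphism_def
  using continuous_map_image_subset_topspace top_Pspace by fastforce

theorem lemma2p1:
  fixes grk :: "real \<Rightarrow> 'k::comm_ring_1 set"
    and grX :: "real \<Rightarrow> 'a::comm_ring_1 set" and \<iota>X :: "'k \<Rightarrow> 'a"
    and TX :: "'p topology" and \<pi>X :: "'p \<Rightarrow> 'a set"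
    and grY :: "real \<Rightarrow> 'b::comm_ring_1 set" and \<iota>Y :: "'k \<Rightarrow> 'b"
    and TY :: "'q topology" and \<pi>Y :: "'q \<Rightarrow> 'b set"
    and grZ :: "real \<Rightarrow> 'c::comm_ring_1 set" and \<iota>Z :: "'k \<Rightarrow> 'c"
    and TZ :: "'r topology" and \<pi>Z :: "'r \<Rightarrow> 'c set"
    and \<phi>f :: "'b \<Rightarrow> 'a" and hf :: "'p \<Rightarrow> 'q"
    and \<phi>g :: "'c \<Rightarrow> 'b" and hg :: "'q \<Rightarrow> 'r"
  assumes "graded_field grk"
    and f: "bir_mor grk grX \<iota>X TX \<pi>X grY \<iota>Y TY \<pi>Y \<phi>f hf"
    and g: "bir_mor grk grY \<iota>Y TY \<pi>Y grZ \<iota>Z TZ \<pi>Z \<phi>g hg"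
    and gf: "mor_proper grX \<iota>X TX \<pi>X TZ \<pi>Z (\<phi>f \<circ> \<phi>g) (hg \<circ> hf)"
    and "mor_separated grY \<iota>Y TY \<pi>Y TZ \<pi>Z \<phi>g hg \<or> mor_proper grX \<iota>X TX \<pi>X TY \<pi>Y \<phi>f hf"
  shows "mor_proper grX \<iota>X TX \<pi>X TY \<pi>Y \<phi>f hf \<and> mor_proper grY \<iota>Y TY \<pi>Y TZ \<pi>Z \<phi>g hg"
proof -
  have objX: "bir_obj grk grX \<iota>X TX \<pi>X" and objY: "bir_obj grk grY \<iota>Y TY \<pi>Y"
    and embf: "graded_embedding grY grX \<phi>f" and compf: "\<forall>a. \<phi>f (\<iota>Y a) = \<iota>X a"
    and contf: "continuous_map TX TY hf" and eqf: "\<forall>x\<in>topspace TX. \<pi>Y (hf x) = {a. \<phi>f a \<in> \<pi>X x}"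
    using f unfolding bir_mor_def by blast+
  have objZ: "bir_obj grk grZ \<iota>Z TZ \<pi>Z"
    and contg: "continuous_map TY TZ hg" and eqg: "\<forall>y\<in>topspace TY. \<pi>Z (hg y) = {a. \<phi>g a \<in> \<pi>Y y}"
    using g unfolding bir_mor_def by blast+
  have fX: "graded_field grX" using objX[unfolded bir_obj_def, THEN conjunct2, THEN conjunct1] .
  have fY: "graded_field grY" using objY[unfolded bir_obj_def, THEN conjunct2, THEN conjunct1] .
  have hfT: "\<And>x. x \<in> topspace TX \<Longrightarrow> hf x \<in> topspace TY" using continuous_map_image_subset_topspace[OF contf] by blast
  have hgT: "\<And>y. y \<in> topspace TY \<Longrightarrow> hg y \<in> topspace TZ" using continuous_map_image_subset_topspace[OF contg] by blast
  have piX: "\<And>x. x \<in> topspace TX \<Longrightarrow> \<pi>X x \<in> Pset grX \<iota>X" using obj_pi[OF objX] .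
  have piY: "\<And>y. y \<in> topspace TY \<Longrightarrow> \<pi>Y y \<in> Pset grY \<iota>Y" using obj_pi[OF objY] .
  define Ff where "Ff = fibre_prod grX \<iota>X TY \<pi>Y \<phi>f"
  define Fg where "Fg = fibre_prod grY \<iota>Y TZ \<pi>Z \<phi>g"
  define Fgf where "Fgf = fibre_prod grX \<iota>X TZ \<pi>Z (\<phi>f \<circ> \<phi>g)"
  have gfb: "bij_betw (\<lambda>x. ((hg \<circ> hf) x, \<pi>X x)) (topspace TX) Fgf" using gf unfolding mor_proper_def Fgf_def .
  have gf_inj: "inj_on (\<lambda>x. (hg (hf x), \<pi>X x)) (topspace TX)" using gfb unfolding bij_betw_def by simp
  have gf_img: "(\<lambda>x. (hg (hf x), \<pi>X x)) ` topspace TX = Fgf" using gfb unfolding bij_betw_def by simp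
  have imf: "(\<lambda>x. (hf x, \<pi>X x)) ` topspace TX \<subseteq> Ff"
    unfolding Ff_def fibre_prod_def top_Pspace using hfT piX eqf by auto
  have img: "(\<lambda>y. (hg y, \<pi>Y y)) ` topspace TY \<subseteq> Fg"
    unfolding Fg_def fibre_prod_def top_Pspace using hgT piY eqg by auto
  have g_surj: "Fg \<subseteq> (\<lambda>y. (hg y, \<pi>Y y)) ` topspace TY"
  proof
    fix p assume "p \<in> Fg"
    then obtain z W where p: "p = (z, W)" "z \<in> topspace TZ" "W \<in> Pset grY \<iota>Y" "\<pi>Z z = {a. \<phi>g a \<in> W}"
      unfolding Fg_def fibre_prod_def top_Pspace by blast
    obtain V where V: "V \<in> Pset grX \<iota>X" "{b. \<phi>f b \<in> V} = W" using ext_val[OF fY fX embf compf p(3)] by blast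
    have "(z, V) \<in> Fgf" unfolding Fgf_def fibre_prod_def top_Pspace using p V by auto
    then obtain x where x: "x \<in> topspace TX" "hg (hf x) = z" "\<pi>X x = V" using gf_img by auto
    have "\<pi>Y (hf x) = W" using eqf x V by auto
    then show "p \<in> (\<lambda>y. (hg y, \<pi>Y y)) ` topspace TY" using p x hfT by force
  qed
  have gprop_of_inj: "mor_proper grY \<iota>Y TY \<pi>Y TZ \<pi>Z \<phi>g hg"
    if ginj: "inj_on (\<lambda>y. (hg y, \<pi>Y y)) (topspace TY)"
    unfolding mor_proper_def bij_betw_def using ginj img g_surj unfolding Fg_def by blast
  show ?thesis
  proof (cases "mor_separated grY \<iota>Y TY \<pi>Y TZ \<pi>Z \<phi>g hg")
    case True
    then have ginj: "inj_on (\<lambda>y. (hg y, \<pi>Y y)) (topspace TY)" unfolding mor_separated_def .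
    have finj: "inj_on (\<lambda>x. (hf x, \<pi>X x)) (topspace TX)"
      using gf_inj unfolding inj_on_def by auto
    have fsurj: "Ff \<subseteq> (\<lambda>x. (hf x, \<pi>X x)) ` topspace TX"
    proof
      fix p assume "p \<in> Ff"
      then obtain y V where p: "p = (y, V)" "y \<in> topspace TY" "V \<in> Pset grX \<iota>X" "\<pi>Y y = {a. \<phi>f a \<in> V}"
        unfolding Ff_def fibre_prod_def top_Pspace by blast
      have "(hg y, V) \<in> Fgf" unfolding Fgf_def fibre_prod_def top_Pspace using p hgT eqg by auto
      then obtain x where x: "x \<in> topspace TX" "hg (hf x) = hg y" "\<pi>X x = V" using gf_img by auto
      have "\<pi>Y (hf x) = \<pi>Y y" using eqf x p by auto
      then have "hf x = y" using ginj x hfT[OF x(1)] p(2) unfolding inj_on_def by auto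
      then show "p \<in> (\<lambda>x. (hf x, \<pi>X x)) ` topspace TX" using p x by force
    qed
    have "mor_proper grX \<iota>X TX \<pi>X TY \<pi>Y \<phi>f hf"
      unfolding mor_proper_def bij_betw_def using finj imf fsurj unfolding Ff_def by blast
    then show ?thesis using gprop_of_inj[OF ginj] by blast
  next
    case False
    then have fp: "mor_proper grX \<iota>X TX \<pi>X TY \<pi>Y \<phi>f hf" using assms(5) by blast
    then have fimg: "(\<lambda>x. (hf x, \<pi>X x)) ` topspace TX = Ff" unfolding mor_proper_def bij_betw_def Ff_def by blast
    have ginj: "inj_on (\<lambda>y. (hg y, \<pi>Y y)) (topspace TY)"
    proof (rule inj_onI)
      fix y1 y2 assume y: "y1 \<in> topspace TY" "y2 \<in> topspace TY" "(hg y1, \<pi>Y y1) = (hg y2, \<pi>Y y2)"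
      obtain V where V: "V \<in> Pset grX \<iota>X" "{b. \<phi>f b \<in> V} = \<pi>Y y1" using ext_val[OF fY fX embf compf piY[OF y(1)]] by blast
      have "(y1, V) \<in> Ff" "(y2, V) \<in> Ff" unfolding Ff_def fibre_prod_def top_Pspace using y V by auto
      then obtain x1 x2 where x: "x1 \<in> topspace TX" "hf x1 = y1" "\<pi>X x1 = V" "x2 \<in> topspace TX" "hf x2 = y2" "\<pi>X x2 = V"
        using fimg by (smt (verit, ccfv_threshold) Pair_inject imageE)
      have "x1 = x2" using gf_inj x y(3) unfolding inj_on_def by auto
      then show "y1 = y2" using x by simp
    qed
    then show ?thesis using fp gprop_of_inj by blast
  qed
qed


end
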